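(* Let $d\ge1$, $0<s_0<s_1$, $0<\alpha_0<\alpha_1$, $W=[s_0,s_1]\times[\alpha_0,\alpha_1]$, and $g\in L^2_0(\mathbb{T}^d;\mathbb{C})$ with Fourier coefficients $\hat g_k$. For $k\in\mathbb{Z}^d\setminus\{0\}$ let $E_k(s,\alpha)=\frac{\alpha}{\alpha+|k|^{2s}}$ and, for the partial derivatives of $\mathcal{S}(s,\alpha)=(E_k(s,\alpha)\hat g_k)_{k}$, let $\partial^i_\alpha\mathcal{S}(s,\alpha)=(\partial_\alpha^iE_k(s,\alpha)\hat g_k)_{k\neq0}$, $\partial_s^i\mathcal{S}(s,\alpha)=(\partial_s^iE_k(s,\alpha)\hat g_k)_{k\ne0}$, $\partial_{s,\alpha}\mathcal{S}(s,\alpha)=(\partial_s\partial_\alpha E_k(s,\alpha)\hat g_k)_{k\ne0}$. Then there are constants $M_{\alpha_1,i}>0$ ($i=1,2,3$) and $M_{\alpha_1}>0$ depending only on $\alpha_1$ (and $i$) such that for every $\varepsilon>0$, $i\in\{1,2,3\}$ and $(s,\alpha)\in W$: $$\|\partial^i_\alpha\mathcal{S}(s,\alpha)\|_{\ell^2}\le\sum_{k\ne0}\frac{i!}{|k|^{2si}}|\hat g_k|,\qquad \|\partial^i_s\mathcal{S}(s,\alpha)\|_{\ell^2}\le\sum_{k\ne0}\frac{M_{\alpha_1,i}}{\varepsilon^i|k|^{2s-i\varepsilon}}|\hat g_k|,$$ $$\|\partial_{s,\alpha}\mathcal{S}(s,\alpha)\|_{\ell^2}\le\sum_{k\ne0}\frac{M_{\alpha_1}}{\varepsilon|k|^{2s-\varepsilon}}|\hat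 g_k|.$$
   Context: $\mathbb{T}^d=\mathbb{R}^d/(2\pi\mathbb{Z})^d$; $L^2_0$ denotes zero-mean square-integrable functions; $\hat g_k=\int_{\mathbb{T}^d}g(x)e^{-ik\cdot x}dx$. *)

theory Defs
  imports "HOL-Analysis.Analysis"
begin

text \<open>The torus T^d is represented by the fundamental cube [0,2pi]^d; points are
  functions nat => real (extensional outside {..<d}), with the product Lebesgue measure.\<close>

definition torus_measure :: "nat \<Rightarrow> (nat \<Rightarrow> real) measure" where
  "torus_measure d = PiM {..<d} (\<lambda>_. lborel)"

definition torus_box :: "nat \<Rightarrow> (nat \<Rightarrow> real) set" where
  "torus_box d = PiE {..<d} (\<lambda>_. {0..2*pi})"

definition lattice :: "nat \<Rightarrow> (nat \<Rightarrow> int) set" where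
  "lattice d = {k. \<forall>i\<ge>d. k i = 0}"

definition nonzero_lattice :: "nat \<Rightarrow> (nat \<Rightarrow> int) set" where
  "nonzero_lattice d = lattice d - {\<lambda>_. 0}"

definition knorm :: "nat \<Rightarrow> (nat \<Rightarrow> int) \<Rightarrow> real" where
  "knorm d k = sqrt (\<Sum>i<d. (real_of_int (k i))^2)"

definition fourier_coeff :: "nat \<Rightarrow> ((nat \<Rightarrow> real) \<Rightarrow> complex) \<Rightarrow> (nat \<Rightarrow> int) \<Rightarrow> complex" where
  "fourier_coeff d g k =
     set_lebesgue_integral (torus_measure d) (torus_box d)
       (\<lambda>x. g x * cis (- (\<Sum>i<d. real_of_int (k i) * x i)))"

definition L2_0 :: "nat \<Rightarrow> ((nat \<Rightarrow> real) \<Rightarrow> complex) \<Rightarrow> bool" where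
  "L2_0 d g \<longleftrightarrow> g \<in> borel_measurable (torus_measure d)
     \<and> set_integrable (torus_measure d) (torus_box d) (\<lambda>x. (cmod (g x))^2)
     \<and> set_lebesgue_integral (torus_measure d) (torus_box d) g = 0"

definition Ek :: "nat \<Rightarrow> (nat \<Rightarrow> int) \<Rightarrow> real \<Rightarrow> real \<Rightarrow> real" where
  "Ek d k s a = a / (a + knorm d k powr (2 * s))"

text \<open>l2 norm of a family over A bounded by the (possibly infinite) sum of b over A:
  if the right-hand side diverges the inequality is trivially true (= +infinity);
  otherwise the family is in l2 and its l2 norm is bounded by the sum.\<close>
definition l2_bounded_by :: "'k set \<Rightarrow> ('k \<Rightarrow> complex) \<Rightarrow> ('k \<Rightarrow> real) \<Rightarrow> bool" where
  "l2_bounded_by A f b \<longleftrightarrow>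
     (b summable_on A \<longrightarrow>
        ((\<lambda>k. (cmod (f k))^2) summable_on A \<and>
         sqrt (\<Sum>\<^sub>\<infinity>k\<in>A. (cmod (f k))^2) \<le> (\<Sum>\<^sub>\<infinity>k\<in>A. b k)))"

end

theory Submission
  imports Defs "HOL-Analysis.Analysis"
begin


lemma fin_le_infsum:
  fixes b :: "'k \<Rightarrow> real"
  assumes "b summable_on A" "\<And>k. k\<in>A \<Longrightarrow> 0 \<le> b k" "finite F" "F \<subseteq> A"
  shows "sum b F \<le> infsum b A"
proof -
  have "sum b F = infsum b F" using assms(3) by simp
  also have "\<dots> \<le> infsum b A"
    by (rule infsum_mono_neutral) (use assms in auto)
  finally show ?thesis .
qed

lemma sq_sum_le:
  fixes b :: "'k \<Rightarrow> real"
  assumes "finite F" "\<And>k. k\<in>F \<Longrightarrow> 0 \<le> b k"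
  shows "sum (\<lambda>k. (b k)^2) F \<le> (sum b F)^2"
  using assms
proof (induction F rule: finite_induct)
  case (insert x F)
  have "0 \<le> sum b F" using insert by (auto intro!: sum_nonneg)
  moreover have "0 \<le> b x" using insert by auto
  ultimately have "0 \<le> 2 * b x * sum b F" by simp
  thus ?case using insert by (auto simp: power2_eq_square algebra_simps)
qed simp

lemma l2_bound_pointwise:
  assumes "\<And>k. k \<in> A \<Longrightarrow> cmod (f k) \<le> b k"
  shows "l2_bounded_by A f b"
  unfolding l2_bounded_by_def
proof
  assume sb: "b summable_on A"
  have b0: "\<And>k. k\<in>A \<Longrightarrow> 0 \<le> b k" using assms norm_ge_zero order_trans by blast
  have fin: "sum (\<lambda>k. (cmod (f k))^2) F \<le> (infsum b A)^2" if "finite F" "F \<subseteq> A" for F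
  proof -
    have "sum (\<lambda>k. (cmod (f k))^2) F \<le> sum (\<lambda>k. (b k)^2) F"
      by (rule sum_mono) (use that assms in \<open>auto intro!: power_mono\<close>)
    also have "\<dots> \<le> (sum b F)^2"
      by (rule sq_sum_le) (use that b0 in auto)
    also have "\<dots> \<le> (infsum b A)^2"
      by (rule power_mono) (use fin_le_infsum[OF sb b0 that] that b0 in \<open>auto intro!: sum_nonneg\<close>)
    finally show ?thesis .
  qed
  have s: "(\<lambda>k. (cmod (f k))^2) summable_on A"
    by (rule nonneg_bdd_above_summable_on) (use fin in \<open>auto intro!: bdd_aboveI\<close>)
  have "infsum (\<lambda>k. (cmod (f k))^2) A \<le> (infsum b A)^2"
    by (rule infsum_le_finite_sums[OF s]) (use fin in auto)
  hence "sqrt (infsum (\<lambda>k. (cmod (f k))^2) A) \<le> sqrt ((infsum b A)^2)" by (rule real_sqrt_le_mono)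
  also have "\<dots> = infsum b A" using infsum_nonneg[of A b] b0 by simp
  finally show "(\<lambda>k. (cmod (f k))^2) summable_on A \<and> sqrt (infsum (\<lambda>k. (cmod (f k))^2) A) \<le> infsum b A"
    using s by simp
qed



lemma deriv_on_open:
  assumes "open S" "\<And>y. y\<in>S \<Longrightarrow> deriv f y = g y"
    "\<And>y. y\<in>S \<Longrightarrow> (g has_real_derivative h y) (at y)" "y\<in>S"
  shows "deriv (deriv f) y = h y"
proof -
  have "eventually (\<lambda>z. z \<in> S) (nhds y)" using assms(1,4) eventually_nhds_in_open by blast
  hence "eventually (\<lambda>z. deriv f z = g z) (nhds y)" by (rule eventually_mono) (use assms(2) in auto)
  hence "deriv (deriv f) y = deriv g y" by (rule deriv_cong_ev) simp
  also have "\<dots> = h y" using assms(3)[OF assms(4)] by (rule DERIV_imp_deriv)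
  finally show ?thesis .
qed

lemma a_d1: "(x::real) > 0 \<Longrightarrow> a > -x \<Longrightarrow> ((\<lambda>a. a/(a+x)) has_real_derivative x/(a+x)^2) (at a)"
proof -
  assume "x > 0" "a > -x"
  hence nz: "a + x \<noteq> 0" by simp
  show ?thesis
  using nz by (auto intro!: derivative_eq_intros simp: divide_simps) (simp add: algebra_simps power2_eq_square)
qed
lemma a_d2: "(x::real) > 0 \<Longrightarrow> a > -x \<Longrightarrow> ((\<lambda>a. x/(a+x)^2) has_real_derivative -2*x/(a+x)^3) (at a)"
proof -
  assume "x > 0" "a > -x"
  hence nz: "a + x \<noteq> 0" by simp
  show ?thesis
  using nz by (auto intro!: derivative_eq_intros simp: divide_simps) (simp add: algebra_simps eval_nat_numeral)
qed
lemma a_d3: "(x::real) > 0 \<Longrightarrow> a > -x \<Longrightarrow> ((\<lambda>a. -2*x/(a+x)^3) has_real_derivative 6*x/(a+x)^4) (at a)"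
proof -
  assume "x > 0" "a > -x"
  hence nz: "a + x \<noteq> 0" by simp
  show ?thesis
  using nz by (auto intro!: derivative_eq_intros simp: divide_simps)
qed

lemma t_d1: "(a::real) > 0 \<Longrightarrow> ((\<lambda>t. a/(a+exp(2*t*L))) has_real_derivative -2*a*L*exp(2*t*L)/(a+exp(2*t*L))^2) (at t)"
proof -
  assume "a > 0"
  hence nz: "a + exp(2*t*L) \<noteq> 0" using exp_gt_zero[of "2*t*L"] by linarith
  show ?thesis
  using nz by (auto intro!: derivative_eq_intros simp: divide_simps) (simp add: algebra_simps eval_nat_numeral)
qed
lemma t_d2: "(a::real) > 0 \<Longrightarrow> ((\<lambda>t. -2*a*L*exp(2*t*L)/(a+exp(2*t*L))^2) has_real_derivative
     -4*a*L^2*exp(2*t*L)*(a-exp(2*t*L))/(a+exp(2*t*L))^3) (at t)"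
proof -
  assume "a > 0"
  hence nz: "a + exp(2*t*L) \<noteq> 0" using exp_gt_zero[of "2*t*L"] by linarith
  show ?thesis
  using nz by (auto intro!: derivative_eq_intros simp: divide_simps) (simp add: algebra_simps eval_nat_numeral)
qed
lemma t_d3: "(a::real) > 0 \<Longrightarrow> ((\<lambda>t. -4*a*L^2*exp(2*t*L)*(a-exp(2*t*L))/(a+exp(2*t*L))^3) has_real_derivative
     -8*a*L^3*exp(2*t*L)*(a^2-4*a*exp(2*t*L)+(exp(2*t*L))^2)/(a+exp(2*t*L))^4) (at t)"
proof -
  assume "a > 0"
  hence nz: "a + exp(2*t*L) \<noteq> 0" using exp_gt_zero[of "2*t*L"] by linarith
  show ?thesis
  using nz by (auto intro!: derivative_eq_intros simp: divide_simps) (simp add: algebra_simps eval_nat_numeral)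
qed
lemma m_d: "(a::real) > 0 \<Longrightarrow> ((\<lambda>t. exp(2*t*L)/(a+exp(2*t*L))^2) has_real_derivative
     2*L*exp(2*t*L)*(a-exp(2*t*L))/(a+exp(2*t*L))^3) (at t)"
proof -
  assume "a > 0"
  hence nz: "a + exp(2*t*L) \<noteq> 0" using exp_gt_zero[of "2*t*L"] by linarith
  show ?thesis
  using nz by (auto intro!: derivative_eq_intros simp: divide_simps) (simp add: algebra_simps eval_nat_numeral)
qed



lemma ln_le_powr: assumes "(n::real) \<ge> 1" "\<epsilon> > 0" shows "ln n \<le> n powr \<epsilon> / \<epsilon>"
proof -
  have "\<epsilon> * ln n = ln (n powr \<epsilon>)" using assms by (simp add: ln_powr)
  also have "\<dots> \<le> n powr \<epsilon> - 1" using assms by (intro ln_le_minus_one) simp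
  finally have "\<epsilon> * ln n \<le> n powr \<epsilon>" by simp
  thus ?thesis using assms by (simp add: field_simps)
qed

lemma partA:
  assumes "(n::real) \<ge> 1" "\<alpha> > 0" "i \<in> {1,2,3::nat}"
  shows "abs ((deriv ^^ i) (\<lambda>a. a/(a + n powr (2 * s))) \<alpha>) \<le> fact i / n powr (2 * s*real i)"
proof -
  define x where "x = n powr (2 * s)"
  have x0: "x > 0" using assms by (simp add: x_def)
  have xi: "n powr (2 * s*real i) = x^i" unfolding x_def using assms
    by (metis powr_powr powr_realpow x0 x_def)
  define S where "S = {-x<..}"
  have S: "open S" "\<alpha> \<in> S" using assms x0 by (auto simp: S_def)
  have D1: "deriv (\<lambda>a. a/(a+x)) y = x/(y+x)^2" if "y\<in>S" for y
    using that a_d1[OF x0] by (intro DERIV_imp_deriv) (simp add: S_def)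
  have D2: "deriv (deriv (\<lambda>a. a/(a+x))) y = -2*x/(y+x)^3" if "y\<in>S" for y
    by (rule deriv_on_open[OF S(1) D1 _ that]) (use a_d2[OF x0] in \<open>auto simp: S_def\<close>)
  have D3: "deriv (deriv (deriv (\<lambda>a. a/(a+x)))) y = 6*x/(y+x)^4" if "y\<in>S" for y
    by (rule deriv_on_open[OF S(1) D2 _ that]) (use a_d3[OF x0] in \<open>auto simp: S_def\<close>)
  have p: "x^j \<le> (\<alpha>+x)^j" for j using x0 assms by (intro power_mono) auto
  have q: "x/(\<alpha>+x)^(Suc j) \<le> 1/x^j" for j
  proof -
    have "x/(\<alpha>+x)^(Suc j) \<le> x / x^(Suc j)"
      by (rule divide_left_mono) (use p[of "Suc j"] x0 assms in auto)
    also have "\<dots> = 1/x^j" using x0 by simp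
    finally show ?thesis .
  qed
  have "abs ((deriv ^^ i) (\<lambda>a. a/(a + x)) \<alpha>) \<le> fact i / x^i"
    using assms(3)
  proof (elim insertE)
    assume "i = 1" thus ?thesis using D1[OF S(2)] q[of 1] x0 assms by (simp add: numeral_2_eq_2 abs_div_pos)
  next
    assume "i = 2"
    hence "(deriv ^^ i) (\<lambda>a. a/(a + x)) \<alpha> = -2*x/(\<alpha>+x)^3" using D2[OF S(2)] by (simp add: numeral_2_eq_2)
    thus ?thesis using q[of 2] x0 assms \<open>i=2\<close> by (simp add: numeral_3_eq_3 abs_div_pos)
  next
    assume "i = 3"
    hence "(deriv ^^ i) (\<lambda>a. a/(a + x)) \<alpha> = 6*x/(\<alpha>+x)^4" using D3[OF S(2)] by (simp add: numeral_3_eq_3)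
    moreover have "fact 3 = (6::real)" by (simp add: fact_numeral)
    ultimately show ?thesis using q[of 3] x0 assms \<open>i=3\<close> by (simp add: eval_nat_numeral abs_div_pos)
  qed simp
  thus ?thesis unfolding xi x_def .
qed

lemma r_le: "(a::real) > 0 \<Longrightarrow> e > 0 \<Longrightarrow> e/(a+e)^2 \<le> 1/e"
proof -
  assume h: "a > 0" "e > 0"
  have "e/(a+e)^2 \<le> e/e^2" by (rule divide_left_mono) (use h in \<open>auto intro!: power_mono\<close>)
  thus ?thesis using h by (simp add: power2_eq_square)
qed

lemma canc3: "(u::real) \<noteq> 0 \<Longrightarrow> X*u/u^3 = X/u^2"
  by (simp add: eval_nat_numeral)
lemma canc4: "(u::real) \<noteq> 0 \<Longrightarrow> X*(2*u^2)/u^4 = 2*X/u^2"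
  by (simp add: eval_nat_numeral)

lemma g2_le: assumes "(a::real) > 0" "e > 0" "L \<ge> 0"
  shows "abs (-4*a*L^2*e*(a-e)/(a+e)^3) \<le> 4*a*L^2/e"
proof -
  have "abs (-4*a*L^2*e*(a-e)/(a+e)^3) = 4*a*L^2*e*abs (a-e)/(a+e)^3"
    using assms by (simp add: abs_mult abs_divide)
  also have "\<dots> \<le> 4*a*L^2*e*(a+e)/(a+e)^3"
    using assms by (intro divide_right_mono mult_left_mono) auto
  also have "\<dots> = 4*a*L^2*(e/(a+e)^2)" using assms canc3[of "a+e" "4*a*L^2*e"] by simp
  also have "\<dots> \<le> 4*a*L^2*(1/e)" using r_le[OF assms(1,2)] assms by (intro mult_left_mono) auto
  finally show ?thesis by simp
qed

lemma g3_le: assumes "(a::real) > 0" "e > 0" "L \<ge> 0"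
  shows "abs (-8*a*L^3*e*(a^2-4*a*e+e^2)/(a+e)^4) \<le> 16*a*L^3/e"
proof -
  have w: "abs (a^2-4*a*e+e^2) \<le> 2*(a+e)^2" using assms by (simp add: abs_le_iff power2_eq_square algebra_simps)
  have "abs (-8*a*L^3*e*(a^2-4*a*e+e^2)/(a+e)^4) = 8*a*L^3*e*abs (a^2-4*a*e+e^2)/(a+e)^4"
    using assms by (simp add: abs_mult abs_divide)
  also have "\<dots> \<le> 8*a*L^3*e*(2*(a+e)^2)/(a+e)^4"
    using assms w by (intro divide_right_mono mult_left_mono) auto
  also have "\<dots> = 16*a*L^3*(e/(a+e)^2)" using assms canc4[of "a+e" "8*a*L^3*e"] by simp
  also have "\<dots> \<le> 16*a*L^3*(1/e)" using r_le[OF assms(1,2)] assms by (intro mult_left_mono) auto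
  finally show ?thesis by simp
qed

lemma g1_le: assumes "(a::real) > 0" "e > 0" "L \<ge> 0"
  shows "abs (-2*a*L*e/(a+e)^2) \<le> 2*a*L^1/e"
proof -
  have "abs (-2*a*L*e/(a+e)^2) = 2*a*L*(e/(a+e)^2)"
    using assms by (simp add: abs_mult abs_divide)
  also have "\<dots> \<le> 2*a*L*(1/e)" using r_le[OF assms(1,2)] assms by (intro mult_left_mono) auto
  finally show ?thesis by simp
qed

lemma m_le: assumes "(a::real) > 0" "e > 0" "L \<ge> 0"
  shows "abs (2*L*e*(a-e)/(a+e)^3) \<le> 2*1*L^1/e"
proof -
  have "abs (2*L*e*(a-e)/(a+e)^3) = 2*L*e*abs (a-e)/(a+e)^3"
    using assms by (simp add: abs_mult abs_divide)
  also have "\<dots> \<le> 2*L*e*(a+e)/(a+e)^3"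
    using assms by (intro divide_right_mono mult_left_mono) auto
  also have "\<dots> = 2*L*(e/(a+e)^2)" using assms canc3[of "a+e" "2*L*e"] by simp
  also have "\<dots> \<le> 2*L*(1/e)" using r_le[OF assms(1,2)] assms by (intro mult_left_mono) auto
  finally show ?thesis by simp
qed

lemma B_fin:
  assumes "(a::real) > 0" "a \<le> A" "L \<ge> 0" "e > 0" "\<epsilon> > 0" "P > 0" "L \<le> P/\<epsilon>"
    "abs g \<le> c*a*L^i/e" "c \<ge> 0"
  shows "abs g \<le> c*A/(\<epsilon>^i*(e/P^i))"
proof -
  have "c*a*L^i \<le> c*A*(P/\<epsilon>)^i"
    using assms by (intro mult_mono power_mono) auto
  hence "c*a*L^i/e \<le> c*A*(P/\<epsilon>)^i/e" using assms by (intro divide_right_mono) auto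
  also have "\<dots> = c*A/(\<epsilon>^i*(e/P^i))" using assms by (simp add: power_divide field_simps)
  finally show ?thesis using assms(8) by linarith
qed

definition Mc :: "real \<Rightarrow> nat \<Rightarrow> real" where
  "Mc A i = (if i = 1 then 2*A else if i = 2 then 4*A else 16*A)"

lemma partB:
  assumes "(n::real) \<ge> 1" "\<alpha> > 0" "\<alpha> \<le> A" "\<epsilon> > 0" "i \<in> {1,2,3::nat}"
  shows "abs ((deriv ^^ i) (\<lambda>t. \<alpha>/(\<alpha> + n powr (2 * t))) s) \<le> Mc A i / (\<epsilon>^i * n powr (2 * s - real i * \<epsilon>))"
proof -
  define L where "L = ln n"
  define e where "e = exp(2* s*L)"
  define P where "P = n powr \<epsilon>"
  have L0: "L \<ge> 0" using assms by (simp add: L_def)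
  have e0: "e > 0" by (simp add: e_def)
  have P0: "P > 0" using assms by (simp add: P_def)
  have LP: "L \<le> P/\<epsilon>" using ln_le_powr[OF assms(1,4)] by (simp add: L_def P_def)
  define f0 where "f0 = (\<lambda>t. \<alpha>/(\<alpha>+exp(2*t*L)))"
  define f1 where "f1 = (\<lambda>t. -2*\<alpha>*L*exp(2*t*L)/(\<alpha>+exp(2*t*L))^2)"
  define f2 where "f2 = (\<lambda>t. -4*\<alpha>*L^2*exp(2*t*L)*(\<alpha>-exp(2*t*L))/(\<alpha>+exp(2*t*L))^3)"
  define f3 where "f3 = (\<lambda>t. -8*\<alpha>*L^3*exp(2*t*L)*(\<alpha>^2-4*\<alpha>*exp(2*t*L)+(exp(2*t*L))^2)/(\<alpha>+exp(2*t*L))^4)"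
  have fe: "(\<lambda>t. \<alpha>/(\<alpha> + n powr (2 * t))) = f0"
    using assms by (auto simp: powr_def L_def mult.commute f0_def)
  have d1: "deriv f0 = f1"
    using t_d1[OF assms(2)] unfolding f0_def f1_def by (intro ext DERIV_imp_deriv)
  have d2: "deriv f1 = f2"
    using t_d2[OF assms(2)] unfolding f2_def f1_def by (intro ext DERIV_imp_deriv)
  have d3: "deriv f2 = f3"
    using t_d3[OF assms(2)] unfolding f2_def f3_def by (intro ext DERIV_imp_deriv)
  have pw: "n powr (2 * s - real i * \<epsilon>) = e / P^i"
  proof -
    have "n powr (real i * \<epsilon>) = P^i" unfolding P_def using assms
      by (metis mult.commute powr_powr powr_realpow powr_gt_zero not_one_le_zero less_le)
    moreover have "n powr (2 * s) = e" using assms by (simp add: powr_def e_def L_def mult.commute)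
    ultimately show ?thesis by (simp add: powr_diff)
  qed
  have "abs ((deriv ^^ i) f0 s) \<le> Mc A i / (\<epsilon>^i * (e / P^i))"
    using assms(5)
  proof (elim insertE)
    assume i: "i = 1"
    have "abs ((deriv ^^ i) f0 s) \<le> 2*A/(\<epsilon>^1*(e/P^1))"
      unfolding i using assms L0 e0 P0 LP g1_le[OF assms(2) e0 L0]
      by (intro B_fin[where c=2 and i=1]) (auto simp: d1 e_def f1_def)
    thus ?thesis by (simp add: i Mc_def)
  next
    assume i: "i = 2"
    have "abs ((deriv ^^ i) f0 s) \<le> 4*A/(\<epsilon>^2*(e/P^2))"
      unfolding i using assms L0 e0 P0 LP g2_le[OF assms(2) e0 L0]
      by (intro B_fin[where c=4 and i=2]) (auto simp: d1 d2 e_def numeral_2_eq_2 f2_def)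
    thus ?thesis by (simp add: i Mc_def)
  next
    assume i: "i = 3"
    have "abs ((deriv ^^ i) f0 s) \<le> 16*A/(\<epsilon>^3*(e/P^3))"
      unfolding i using assms L0 e0 P0 LP g3_le[OF assms(2) e0 L0]
      by (intro B_fin[where c=16 and i=3]) (auto simp: d1 d2 d3 e_def numeral_3_eq_3 f3_def)
    thus ?thesis by (simp add: i Mc_def)
  qed simp
  thus ?thesis unfolding fe pw .
qed

lemma partC:
  assumes "(n::real) \<ge> 1" "\<alpha> > 0" "\<epsilon> > 0"
  shows "abs (deriv (\<lambda>t. deriv (\<lambda>a. a/(a + n powr (2 * t))) \<alpha>) s) \<le> 2 / (\<epsilon> * n powr (2 * s - \<epsilon>))"
proof -
  define L where "L = ln n"
  define e where "e = exp(2* s*L)"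
  define P where "P = n powr \<epsilon>"
  have L0: "L \<ge> 0" using assms by (simp add: L_def)
  have e0: "e > 0" by (simp add: e_def)
  have P0: "P > 0" using assms by (simp add: P_def)
  have LP: "L \<le> P/\<epsilon>" using ln_le_powr[OF assms(1,3)] by (simp add: L_def P_def)
  define h where "h = (\<lambda>t. exp(2*t*L)/(\<alpha>+exp(2*t*L))^2)"
  have inner: "(\<lambda>t. deriv (\<lambda>a. a/(a + n powr (2 * t))) \<alpha>) = h"
  proof
    fix t
    have x: "n powr (2 * t) = exp(2*t*L)" using assms by (simp add: powr_def L_def mult.commute)
    have "exp(2*t*L) > 0" by simp
    hence "deriv (\<lambda>a. a/(a + exp(2*t*L))) \<alpha> = exp(2*t*L)/(\<alpha>+exp(2*t*L))^2"
      using assms \<open>exp(2*t*L) > 0\<close> by (intro DERIV_imp_deriv a_d1) linarith+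
    thus "deriv (\<lambda>a. a/(a + n powr (2 * t))) \<alpha> = h t" unfolding x h_def .
  qed
  have dh: "deriv h s = 2*L*e*(\<alpha>-e)/(\<alpha>+e)^3"
    unfolding h_def e_def by (intro DERIV_imp_deriv m_d assms)
  have pw: "n powr (2 * s - \<epsilon>) = e / P"
  proof -
    have "n powr (2 * s) = e" using assms by (simp add: powr_def e_def L_def mult.commute)
    thus ?thesis by (simp add: powr_diff P_def)
  qed
  have "abs (deriv h s) \<le> 2*1/(\<epsilon>^1*(e/P^1))"
    using assms L0 e0 P0 LP m_le[OF assms(2) e0 L0]
    by (intro B_fin[where c=2 and i=1 and a=1]) (auto simp: dh)
  thus ?thesis unfolding inner pw by simp
qed

lemma knorm_ge1: assumes "k \<in> nonzero_lattice d" shows "knorm d k \<ge> 1"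
proof -
  from assms have kl: "\<forall>i\<ge>d. k i = 0" "k \<noteq> (\<lambda>_. 0)" by (auto simp: nonzero_lattice_def lattice_def)
  then obtain j where j: "k j \<noteq> 0" by auto
  with kl have jd: "j < d" by (meson not_le)
  have "1 \<le> (real_of_int (k j))^2"
  proof -
    have "1 \<le> \<bar>k j\<bar>" using j by linarith
    hence "1 \<le> \<bar>real_of_int (k j)\<bar>" by linarith
    thus ?thesis by (metis abs_ge_zero one_le_power power2_abs)
  qed
  also have "\<dots> \<le> (\<Sum>i<d. (real_of_int (k i))^2)"
    using jd by (intro member_le_sum) auto
  finally show ?thesis unfolding knorm_def by simp
qed


theorem lemma3:
  fixes \<alpha>1 :: real
  assumes "0 < \<alpha>1"
  shows "\<exists>M :: nat \<Rightarrow> real. \<exists>M' :: real.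
    (\<forall>i\<in>{1,2,3}. 0 < M i) \<and> 0 < M' \<and>
    (\<forall>(d::nat) (s0::real) s1 (\<alpha>0::real) g (\<epsilon>::real) s \<alpha>.
       1 \<le> d \<and> 0 < s0 \<and> s0 < s1 \<and> 0 < \<alpha>0 \<and> \<alpha>0 < \<alpha>1 \<and> L2_0 d g \<and> 0 < \<epsilon>
       \<and> s \<in> {s0..s1} \<and> \<alpha> \<in> {\<alpha>0..\<alpha>1} \<longrightarrow>
       (\<forall>i::nat\<in>{1,2,3}.
          l2_bounded_by (nonzero_lattice d)
            (\<lambda>k. complex_of_real ((deriv ^^ i) (\<lambda>a. Ek d k s a) \<alpha>) * fourier_coeff d g k)
            (\<lambda>k. fact i / knorm d k powr (2 * s * real i) * cmod (fourier_coeff d g k)))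
     \<and> (\<forall>i::nat\<in>{1,2,3}.
          l2_bounded_by (nonzero_lattice d)
            (\<lambda>k. complex_of_real ((deriv ^^ i) (\<lambda>t. Ek d k t \<alpha>) s) * fourier_coeff d g k)
            (\<lambda>k. M i / (\<epsilon> ^ i * knorm d k powr (2 * s - real i * \<epsilon>)) * cmod (fourier_coeff d g k)))
     \<and> l2_bounded_by (nonzero_lattice d)
            (\<lambda>k. complex_of_real (deriv (\<lambda>t. deriv (\<lambda>a. Ek d k t a) \<alpha>) s) * fourier_coeff d g k)
            (\<lambda>k. M' / (\<epsilon> * knorm d k powr (2 * s - \<epsilon>)) * cmod (fourier_coeff d g k)))"
  proof -
  have Mpos: "\<forall>i\<in>{1,2,3}. 0 < Mc \<alpha>1 i" using assms by (auto simp: Mc_def)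
  have main: "(\<forall>i::nat\<in>{1,2,3}.
          l2_bounded_by (nonzero_lattice d)
            (\<lambda>k. complex_of_real ((deriv ^^ i) (\<lambda>a. Ek d k s a) \<alpha>) * fourier_coeff d g k)
            (\<lambda>k. fact i / knorm d k powr (2 * s * real i) * cmod (fourier_coeff d g k)))
     \<and> (\<forall>i::nat\<in>{1,2,3}.
          l2_bounded_by (nonzero_lattice d)
            (\<lambda>k. complex_of_real ((deriv ^^ i) (\<lambda>t. Ek d k t \<alpha>) s) * fourier_coeff d g k)
            (\<lambda>k. Mc \<alpha>1 i / (\<epsilon> ^ i * knorm d k powr (2 * s - real i * \<epsilon>)) * cmod (fourier_coeff d g k)))
     \<and> l2_bounded_by (nonzero_lattice d)
            (\<lambda>k. complex_of_real (deriv (\<lambda>t. deriv (\<lambda>a. Ek d k t a) \<alpha>) s) * fourier_coeff d g k)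
            (\<lambda>k. 2 / (\<epsilon> * knorm d k powr (2 * s - \<epsilon>)) * cmod (fourier_coeff d g k))"
    if h: "0 < \<epsilon>" "\<alpha> \<in> {\<alpha>0..\<alpha>1}" "0 < \<alpha>0" for d :: nat and g and \<epsilon> s \<alpha> \<alpha>0
  proof (intro conjI ballI)
    have a0: "\<alpha> > 0" "\<alpha> \<le> \<alpha>1" using h by auto
    have cm: "cmod (complex_of_real c * z) \<le> B * cmod z" if "abs c \<le> B" for c B z
      using that by (simp add: norm_mult mult_right_mono)
    fix i :: nat assume i: "i \<in> {1,2,3}"
    show "l2_bounded_by (nonzero_lattice d)
            (\<lambda>k. complex_of_real ((deriv ^^ i) (\<lambda>a. Ek d k s a) \<alpha>) * fourier_coeff d g k)
            (\<lambda>k. fact i / knorm d k powr (2 * s * real i) * cmod (fourier_coeff d g k))"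
    proof (rule l2_bound_pointwise, rule cm)
      fix k assume "k \<in> nonzero_lattice d"
      hence n1: "knorm d k \<ge> 1" by (rule knorm_ge1)
      have e: "(\<lambda>a. Ek d k s a) = (\<lambda>a. a/(a + knorm d k powr (2 * s)))" by (simp add: Ek_def)
      show "\<bar>(deriv ^^ i) (\<lambda>a. Ek d k s a) \<alpha>\<bar> \<le> fact i / knorm d k powr (2 * s * real i)"
        unfolding e by (rule partA[OF n1 a0(1) i])
    qed
  next
    have a0: "\<alpha> > 0" "\<alpha> \<le> \<alpha>1" using h by auto
    have cm: "cmod (complex_of_real c * z) \<le> B * cmod z" if "abs c \<le> B" for c B z
      using that by (simp add: norm_mult mult_right_mono)
    fix i :: nat assume i: "i \<in> {1,2,3}"
    show "l2_bounded_by (nonzero_lattice d)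
            (\<lambda>k. complex_of_real ((deriv ^^ i) (\<lambda>t. Ek d k t \<alpha>) s) * fourier_coeff d g k)
            (\<lambda>k. Mc \<alpha>1 i / (\<epsilon> ^ i * knorm d k powr (2 * s - real i * \<epsilon>)) * cmod (fourier_coeff d g k))"
    proof (rule l2_bound_pointwise, rule cm)
      fix k assume "k \<in> nonzero_lattice d"
      hence n1: "knorm d k \<ge> 1" by (rule knorm_ge1)
      have e: "(\<lambda>t. Ek d k t \<alpha>) = (\<lambda>t. \<alpha>/(\<alpha> + knorm d k powr (2 * t)))" by (simp add: Ek_def)
      show "\<bar>(deriv ^^ i) (\<lambda>t. Ek d k t \<alpha>) s\<bar> \<le> Mc \<alpha>1 i / (\<epsilon> ^ i * knorm d k powr (2 * s - real i * \<epsilon>))"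
        unfolding e by (rule partB[OF n1 a0 h(1) i])
    qed
  next
    have a0: "\<alpha> > 0" "\<alpha> \<le> \<alpha>1" using h by auto
    have cm: "cmod (complex_of_real c * z) \<le> B * cmod z" if "abs c \<le> B" for c B z
      using that by (simp add: norm_mult mult_right_mono)
    show "l2_bounded_by (nonzero_lattice d)
            (\<lambda>k. complex_of_real (deriv (\<lambda>t. deriv (\<lambda>a. Ek d k t a) \<alpha>) s) * fourier_coeff d g k)
            (\<lambda>k. 2 / (\<epsilon> * knorm d k powr (2 * s - \<epsilon>)) * cmod (fourier_coeff d g k))"
    proof (rule l2_bound_pointwise, rule cm)
      fix k assume "k \<in> nonzero_lattice d"
      hence n1: "knorm d k \<ge> 1" by (rule knorm_ge1)
      have e: "(\<lambda>t. deriv (\<lambda>a. Ek d k t a) \<alpha>) = (\<lambda>t. deriv (\<lambda>a. a/(a + knorm d k powr (2 * t))) \<alpha>)" by (simp add: Ek_def)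
      show "\<bar>deriv (\<lambda>t. deriv (\<lambda>a. Ek d k t a) \<alpha>) s\<bar> \<le> 2 / (\<epsilon> * knorm d k powr (2 * s - \<epsilon>))"
        unfolding e by (rule partC[OF n1 a0(1) h(1)])
    qed
  qed
  show ?thesis
    apply (rule exI[of _ "Mc \<alpha>1"], rule exI[of _ "2::real"])
    using Mpos main by auto
qed

end
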